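(* Let $G$ be a connected $k$-regular graph on $n\ge 2$ vertices. Then $h_G<\sqrt{n-1}\,\gamma(G)$, where $h_G$ is the Cheeger constant of $G$.
   Context: For a finite simple undirected graph $G$ with $n$ vertices, let $\mathcal{F}=\{x\in\mathbb{R}^{V(G)} : \sum_{v} x_v = 0,\ \|x\|_\infty = 1\}$, for $x\in\mathcal{F}$ let $\gamma_x(G)=\max_{uv\in E(G)}|x_u-x_v|$, and $\gamma(G)=\min_{x\in\mathcal{F}}\gamma_x(G)$. For $S\subseteq V(G)$, $\operatorname{vol}(S)=\sum_{u\in S}\deg(u)$; for nonempty proper $S\subsetneq V(G)$, $\partial S$ is the set of edges with exactly one endpoint in $S$, $h_G(S)=|\partial S|/\min(\operatorname{vol}(S),\operatorname{vol}(V(G)\setminus S))$, and $h_G=\min_S h_G(S)$ over nonempty proper subsets $S$. *)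

theory Defs
  imports "HOL-Analysis.Analysis"
begin

definition simple_graph :: "'a set \<Rightarrow> ('a \<Rightarrow> 'a \<Rightarrow> bool) \<Rightarrow> bool" where
  "simple_graph V E \<longleftrightarrow> finite V \<and> (\<forall>u v. E u v \<longrightarrow> u \<in> V \<and> v \<in> V)
     \<and> (\<forall>u v. E u v \<longrightarrow> E v u) \<and> (\<forall>u. \<not> E u u)"

definition connected_graph :: "'a set \<Rightarrow> ('a \<Rightarrow> 'a \<Rightarrow> bool) \<Rightarrow> bool" where
  "connected_graph V E \<longleftrightarrow> (\<forall>u\<in>V. \<forall>v\<in>V. E\<^sup>*\<^sup>* u v)"

definition degree :: "'a set \<Rightarrow> ('a \<Rightarrow> 'a \<Rightarrow> bool) \<Rightarrow> 'a \<Rightarrow> nat" where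
  "degree V E u = card {v \<in> V. E u v}"

definition regular :: "'a set \<Rightarrow> ('a \<Rightarrow> 'a \<Rightarrow> bool) \<Rightarrow> nat \<Rightarrow> bool" where
  "regular V E k \<longleftrightarrow> (\<forall>v\<in>V. degree V E v = k)"

definition feasible :: "'a set \<Rightarrow> ('a \<Rightarrow> real) set" where
  "feasible V = {x. (\<forall>v. v \<notin> V \<longrightarrow> x v = 0) \<and> (\<Sum>v\<in>V. x v) = 0
                   \<and> Max ((\<lambda>v. \<bar>x v\<bar>) ` V) = 1}"

definition gamma_x :: "'a set \<Rightarrow> ('a \<Rightarrow> 'a \<Rightarrow> bool) \<Rightarrow> ('a \<Rightarrow> real) \<Rightarrow> real" where
  "gamma_x V E x = Max {\<bar>x u - x v\<bar> | u v. u \<in> V \<and> v \<in> V \<and> E u v}"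

definition gamma :: "'a set \<Rightarrow> ('a \<Rightarrow> 'a \<Rightarrow> bool) \<Rightarrow> real" where
  "gamma V E = Inf (gamma_x V E ` feasible V)"

definition vol :: "'a set \<Rightarrow> ('a \<Rightarrow> 'a \<Rightarrow> bool) \<Rightarrow> 'a set \<Rightarrow> nat" where
  "vol V E S = (\<Sum>u\<in>S. degree V E u)"

text \<open>Edges with exactly one endpoint in S (each edge counted once, oriented from S).\<close>
definition boundary_size :: "'a set \<Rightarrow> ('a \<Rightarrow> 'a \<Rightarrow> bool) \<Rightarrow> 'a set \<Rightarrow> nat" where
  "boundary_size V E S = card {(u, v). u \<in> S \<and> v \<in> V - S \<and> E u v}"

definition cheeger_ratio :: "'a set \<Rightarrow> ('a \<Rightarrow> 'a \<Rightarrow> bool) \<Rightarrow> 'a set \<Rightarrow> real" where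
  "cheeger_ratio V E S = real (boundary_size V E S) / real (min (vol V E S) (vol V E (V - S)))"

definition cheeger :: "'a set \<Rightarrow> ('a \<Rightarrow> 'a \<Rightarrow> bool) \<Rightarrow> real" where
  "cheeger V E = Min (cheeger_ratio V E ` {S. S \<subseteq> V \<and> S \<noteq> {} \<and> S \<noteq> V})"

end

theory Submission
  imports Defs
begin

lemma sum_sq_shift: "(\<Sum>v\<in>W. (x v - (\<mu>::real))\<^sup>2) = (\<Sum>v\<in>W. (x v)\<^sup>2) - 2 * \<mu> * (\<Sum>v\<in>W. x v) + real (card W) * \<mu>\<^sup>2"
proof -
  have "(\<Sum>v\<in>W. (x v - \<mu>)\<^sup>2) = (\<Sum>v\<in>W. (x v)\<^sup>2 - 2 * \<mu> * x v + \<mu>\<^sup>2)"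
    by (intro sum.cong refl) (simp add: power2_diff)
  also have "\<dots> = (\<Sum>v\<in>W. (x v)\<^sup>2) - (\<Sum>v\<in>W. 2 * \<mu> * x v) + (\<Sum>v\<in>W. \<mu>\<^sup>2)"
    by (simp add: sum.distrib sum_subtractf)
  also have "\<dots> = (\<Sum>v\<in>W. (x v)\<^sup>2) - 2 * \<mu> * (\<Sum>v\<in>W. x v) + real (card W) * \<mu>\<^sup>2"
    by (simp add: sum_distrib_left)
  finally show ?thesis .
qed

lemma abs1_sq: "\<bar>a::real\<bar> = 1 \<Longrightarrow> a\<^sup>2 = 1"
proof -
  assume "\<bar>a\<bar> = 1"
  moreover have "a\<^sup>2 = \<bar>a\<bar>\<^sup>2" by simp
  ultimately show ?thesis by simp
qed

locale rg =
  fixes V :: "'a set" and E :: "'a \<Rightarrow> 'a \<Rightarrow> bool" and k :: nat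
  assumes sg: "simple_graph V E" and conn: "connected_graph V E"
    and reg: "regular V E k" and n2: "card V \<ge> 2"
begin

lemma fin: "finite V" using sg by (simp add: simple_graph_def)
lemma inV: "E u v \<Longrightarrow> u \<in> V \<and> v \<in> V" using sg by (simp add: simple_graph_def)
lemma symE: "E u v \<Longrightarrow> E v u" using sg by (simp add: simple_graph_def)
lemma irr: "\<not> E u u" using sg by (simp add: simple_graph_def)

lemma deg: "v \<in> V \<Longrightarrow> card {w\<in>V. E v w} = k"
  using reg by (simp add: regular_def degree_def)

lemma deg_sum: "u \<in> V \<Longrightarrow> (\<Sum>v\<in>V. if E u v then a else 0) = a * real k"
proof -
  assume u: "u \<in> V"
  have "(\<Sum>v\<in>V. if E u v then a else 0) = real (card {v \<in> V. E u v}) * a"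
    using fin by (simp add: sum.If_cases Int_def)
  then show ?thesis using deg[OF u] by simp
qed

lemma deg_sum2: "u \<in> V \<Longrightarrow> (\<Sum>v\<in>V. if E v u then a else 0) = a * real k"
proof -
  assume u: "u \<in> V"
  have "(\<Sum>v\<in>V. if E v u then a else 0) = (\<Sum>v\<in>V. if E u v then a else 0)"
    by (rule sum.cong) (auto intro: symE)
  then show ?thesis using deg_sum[OF u] by simp
qed

lemma crossing: "E\<^sup>*\<^sup>* u w \<Longrightarrow> u \<in> S \<Longrightarrow> w \<notin> S \<Longrightarrow> \<exists>a b. a \<in> S \<and> b \<notin> S \<and> E a b"
  by (induction rule: rtranclp_induct) auto

lemma ex_nb: assumes v: "v \<in> V" shows "\<exists>w. E v w"
proof -
  have "\<not> V \<subseteq> {v}" using n2 fin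
    by (metis card.empty card.insert empty_iff finite.intros(1) insert_absorb le_antisym
        not_less_eq_eq numeral_2_eq_2 subset_singletonD zero_le)
  then obtain w where w: "w \<in> V" "w \<noteq> v" by auto
  have "E\<^sup>*\<^sup>* v w" using conn v w by (simp add: connected_graph_def)
  then obtain a b where "a \<in> {v}" "b \<notin> {v}" "E a b" using crossing[of v w "{v}"] w by auto
  then show ?thesis by auto
qed

lemma kpos: "k > 0"
proof -
  have "V \<noteq> {}" using n2 by auto
  then obtain v where v: "v \<in> V" by auto
  then obtain w where "E v w" using ex_nb by auto
  then have "w \<in> {w\<in>V. E v w}" using inV by auto
  then have "card {w\<in>V. E v w} > 0" using fin by (auto simp: card_gt_0_iff)
  then show ?thesis using deg[OF v] by simp
qed

lemma vol_eq: "S \<subseteq> V \<Longrightarrow> vol V E S = k * card S"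
  unfolding vol_def degree_def using deg by (simp add: subset_iff)

lemma bs_sum: assumes "S \<subseteq> V"
  shows "real (boundary_size V E S) = (\<Sum>u\<in>V. \<Sum>v\<in>V. if E u v \<and> u \<in> S \<and> v \<notin> S then 1 else 0)"
proof -
  let ?A = "{(u, v). u \<in> S \<and> v \<in> V - S \<and> E u v}"
  have A: "?A = {p \<in> V \<times> V. E (fst p) (snd p) \<and> fst p \<in> S \<and> snd p \<notin> S}"
    using assms inV by auto
  have "real (card ?A) = (\<Sum>p\<in>?A. 1)" by simp
  also have "\<dots> = (\<Sum>p\<in>V\<times>V. if E (fst p) (snd p) \<and> fst p \<in> S \<and> snd p \<notin> S then 1 else 0)"
    unfolding A using fin sum.inter_filter[of "V\<times>V" "\<lambda>_. 1::real" "\<lambda>p. E (fst p) (snd p) \<and> fst p \<in> S \<and> snd p \<notin> S", symmetric] by simp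
  also have "\<dots> = (\<Sum>u\<in>V. \<Sum>v\<in>V. if E u v \<and> u \<in> S \<and> v \<notin> S then 1 else 0)"
    by (simp add: sum.cartesian_product case_prod_beta)
  finally show ?thesis by (simp add: boundary_size_def)
qed

definition Dsum :: "('a \<Rightarrow> real) \<Rightarrow> real" where
  "Dsum f = (\<Sum>u\<in>V. \<Sum>v\<in>V. if E u v then max (f u - f v) 0 else 0)"

lemma Dsum_nonneg: "Dsum f \<ge> 0"
  unfolding Dsum_def by (intro sum_nonneg) auto

lemma split_pt:
  fixes a b \<mu> :: real
  assumes "a \<ge> 0" "b \<ge> 0" "\<mu> > 0" "a > 0 \<Longrightarrow> a \<ge> \<mu>" "b > 0 \<Longrightarrow> b \<ge> \<mu>"
  shows "max (a - b) 0 = \<mu> * max ((if a > 0 then 1 else 0) - (if b > 0 then 1 else 0)) 0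
           + max (max (a - \<mu>) 0 - max (b - \<mu>) 0) 0"
  using assms by (cases "a > 0"; cases "b > 0") (auto simp: max_def)

lemma coarea:
  assumes P0: "P0 \<subseteq> V"
    and hyp: "\<And>S. S \<subseteq> P0 \<Longrightarrow> S \<noteq> {} \<Longrightarrow> c * real (card S) \<le> real (boundary_size V E S)"
  shows "(\<forall>v. f v \<ge> 0) \<Longrightarrow> (\<forall>v. f v > 0 \<longrightarrow> v \<in> P0) \<Longrightarrow> c * (\<Sum>v\<in>V. f v) \<le> Dsum f"
proof (induction "card {v\<in>V. f v > 0}" arbitrary: f rule: less_induct)
  case less
  note nn = less.prems(1) and supp = less.prems(2)
  let ?P = "{v\<in>V. f v > 0}"
  show ?case
  proof (cases "?P = {}")
    case True
    then have "\<forall>v\<in>V. f v = 0" using nn by (metis (mono_tags, lifting) empty_iff mem_Collect_eq order_less_le)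
    then have "(\<Sum>v\<in>V. f v) = 0" by simp
    then show ?thesis using Dsum_nonneg[of f] by simp
  next
    case False
    have finP: "finite ?P" using fin by simp
    define \<mu> where "\<mu> = Min (f ` ?P)"
    have muin: "\<mu> \<in> f ` ?P" unfolding \<mu>_def using False finP by (intro Min_in) auto
    then obtain v0 where v0: "v0 \<in> ?P" "f v0 = \<mu>" by auto
    have mupos: "\<mu> > 0" using v0 by auto
    have mule: "\<And>v. f v > 0 \<Longrightarrow> \<mu> \<le> f v"
    proof -
      fix v assume "f v > 0"
      then have "v \<in> ?P" using supp P0 by auto
      then show "\<mu> \<le> f v" unfolding \<mu>_def using finP by (intro Min_le) auto
    qed
    define g where "g = (\<lambda>v. max (f v - \<mu>) 0)"
    define ind where "ind = (\<lambda>v. if f v > 0 then (1::real) else 0)"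
    have gnn: "\<forall>v. g v \<ge> 0" unfolding g_def by simp
    have gsupp: "\<forall>v. g v > 0 \<longrightarrow> v \<in> P0" unfolding g_def using supp mupos by auto
    have sub: "{v\<in>V. g v > 0} \<subset> ?P"
    proof
      show "{v\<in>V. g v > 0} \<subseteq> ?P" unfolding g_def using mupos by auto
      have "v0 \<notin> {v\<in>V. g v > 0}" using v0 unfolding g_def by auto
      then show "{v\<in>V. g v > 0} \<noteq> ?P" using v0(1) by blast
    qed
    have lt: "card {v\<in>V. g v > 0} < card ?P" using finP sub by (rule psubset_card_mono)
    have IH: "c * (\<Sum>v\<in>V. g v) \<le> Dsum g" using less.hyps[OF lt gnn gsupp] .
    have fdec: "f v = \<mu> * ind v + g v" for v
    proof (cases "f v > 0")
      case True then show ?thesis using mule[OF True] unfolding ind_def g_def by simp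
    next
      case False then have "f v = 0" using nn[rule_format, of v] by linarith
      then show ?thesis using mupos unfolding ind_def g_def by simp
    qed
    have sumf: "(\<Sum>v\<in>V. f v) = \<mu> * real (card ?P) + (\<Sum>v\<in>V. g v)"
    proof -
      have "(\<Sum>v\<in>V. f v) = (\<Sum>v\<in>V. \<mu> * ind v) + (\<Sum>v\<in>V. g v)"
        by (simp add: fdec sum.distrib)
      also have "(\<Sum>v\<in>V. \<mu> * ind v) = \<mu> * real (card ?P)"
      proof -
        have "(\<lambda>v. \<mu> * ind v) = (\<lambda>v. if f v > 0 then \<mu> else 0)" unfolding ind_def by auto
        moreover have "(\<Sum>v\<in>V. if f v > 0 then \<mu> else 0) = \<mu> * real (card ?P)"
          using fin sum.inter_filter[of V "\<lambda>_. \<mu>" "\<lambda>v. f v > 0", symmetric] by (simp add: mult.commute)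
        ultimately show ?thesis by metis
      qed
      finally show ?thesis .
    qed
    have Df: "Dsum f = \<mu> * real (boundary_size V E ?P) + Dsum g"
    proof -
      have pt: "(if E u v then max (f u - f v) 0 else 0) =
          \<mu> * (if E u v \<and> u \<in> ?P \<and> v \<notin> ?P then 1 else 0) + (if E u v then max (g u - g v) 0 else 0)"
        if "u \<in> V" "v \<in> V" for u v
      proof -
        have e: "max (f u - f v) 0 = \<mu> * max ((if f u > 0 then 1 else 0) - (if f v > 0 then 1 else 0)) 0
           + max (max (f u - \<mu>) 0 - max (f v - \<mu>) 0) 0"
          using split_pt[of "f u" "f v" \<mu>] nn mupos mule by auto
        have "max ((if f u > 0 then 1 else 0) - (if f v > 0 then 1 else (0::real))) 0
           = (if u \<in> ?P \<and> v \<notin> ?P then 1 else 0)" using that by auto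
        then show ?thesis using e unfolding g_def by auto
      qed
      have "Dsum f = (\<Sum>u\<in>V. \<Sum>v\<in>V. \<mu> * (if E u v \<and> u \<in> ?P \<and> v \<notin> ?P then 1 else 0)
                  + (if E u v then max (g u - g v) 0 else 0))"
        unfolding Dsum_def by (intro sum.cong refl) (use pt in auto)
      also have "\<dots> = \<mu> * (\<Sum>u\<in>V. \<Sum>v\<in>V. (if E u v \<and> u \<in> ?P \<and> v \<notin> ?P then 1 else 0)) + Dsum g"
        unfolding Dsum_def by (simp add: sum.distrib sum_distrib_left)
      also have "\<dots> = \<mu> * real (boundary_size V E ?P) + Dsum g"
        using bs_sum[of ?P] by simp
      finally show ?thesis .
    qed
    have "c * real (card ?P) \<le> real (boundary_size V E ?P)"
      using hyp[of ?P] supp False by auto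
    then have "\<mu> * (c * real (card ?P)) \<le> \<mu> * real (boundary_size V E ?P)"
      using mupos by (intro mult_left_mono) auto
    then show ?thesis using sumf Df IH by (simp add: algebra_simps)
  qed
qed

lemma finSS: "finite {S. S \<subseteq> V \<and> S \<noteq> {} \<and> S \<noteq> V}"
  using fin by (rule finite_subset[rotated, OF finite_Pow_iff[THEN iffD2]]) auto

lemma cheeger_le: "S \<subseteq> V \<Longrightarrow> S \<noteq> {} \<Longrightarrow> S \<noteq> V \<Longrightarrow> cheeger V E \<le> cheeger_ratio V E S"
  unfolding cheeger_def using finSS by (intro Min_le) auto

lemma ratio_eq: assumes "S \<subseteq> V" "2 * card S \<le> card V"
  shows "cheeger_ratio V E S = real (boundary_size V E S) / (real k * real (card S))"
proof -
  have "card (V - S) = card V - card S" using assms fin by (simp add: card_Diff_subset finite_subset)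
  then have "min (vol V E S) (vol V E (V - S)) = k * card S"
  proof -
    have "k * card S \<le> k * (card V - card S)" using assms(2) by (intro mult_le_mono2) linarith
    then show ?thesis using vol_eq[OF assms(1)] vol_eq[of "V - S"] \<open>card (V - S) = _\<close> by (simp add: min_def)
  qed
  then show ?thesis unfolding cheeger_ratio_def by simp
qed

lemma bs_pos: assumes "S \<subseteq> V" "S \<noteq> {}" "S \<noteq> V" shows "boundary_size V E S > 0"
proof -
  obtain u where u: "u \<in> S" using assms by auto
  obtain w where w: "w \<in> V" "w \<notin> S" using assms by auto
  have "E\<^sup>*\<^sup>* u w" using conn u w assms(1) by (auto simp: connected_graph_def)
  then obtain a b where ab: "a \<in> S" "b \<notin> S" "E a b" using crossing u w by blast
  then have "(a, b) \<in> {(u, v). u \<in> S \<and> v \<in> V - S \<and> E u v}" using inV by auto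
  moreover have "finite {(u, v). u \<in> S \<and> v \<in> V - S \<and> E u v}"
    by (rule finite_subset[of _ "V \<times> V"]) (use fin assms(1) in auto)
  ultimately show ?thesis unfolding boundary_size_def by (auto simp: card_gt_0_iff)
qed

lemma h_pos: "cheeger V E > 0"
proof -
  have ne: "{S. S \<subseteq> V \<and> S \<noteq> {} \<and> S \<noteq> V} \<noteq> {}"
  proof -
    obtain v where "v \<in> V" using n2 by fastforce
    moreover have "{v} \<noteq> V" using n2 by auto
    ultimately show ?thesis by auto
  qed
  have "\<forall>r\<in>cheeger_ratio V E ` {S. S \<subseteq> V \<and> S \<noteq> {} \<and> S \<noteq> V}. r > 0"
  proof
    fix r assume "r \<in> cheeger_ratio V E ` {S. S \<subseteq> V \<and> S \<noteq> {} \<and> S \<noteq> V}"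
    then obtain S where S: "S \<subseteq> V" "S \<noteq> {}" "S \<noteq> V" and r: "r = cheeger_ratio V E S" by auto
    have "card S > 0" using S fin by (auto simp: card_gt_0_iff finite_subset)
    have "card (V - S) > 0" using S fin by (auto simp: card_gt_0_iff)
    have "vol V E S > 0" "vol V E (V - S) > 0"
      using vol_eq[OF S(1)] vol_eq[of "V - S"] kpos \<open>card S > 0\<close> \<open>card (V - S) > 0\<close> by auto
    then show "r > 0" unfolding r cheeger_ratio_def using bs_pos[OF S] by auto
  qed
  then show ?thesis unfolding cheeger_def using finSS ne by (subst Min_gr_iff) auto
qed

lemma h_le1: "cheeger V E \<le> 1"
proof -
  obtain v where v: "v \<in> V" using n2 by fastforce
  have nV: "{v} \<noteq> V" using n2 by auto
  have A: "{(u, w). u \<in> {v} \<and> w \<in> V - {v} \<and> E u w} = (\<lambda>w. (v, w)) ` {w\<in>V. E v w}"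
    using irr by auto
  have "boundary_size V E {v} = k" unfolding boundary_size_def A
    by (subst card_image) (auto simp: inj_on_def deg[OF v])
  moreover have "2 * card {v} \<le> card V" using n2 by simp
  ultimately have "cheeger_ratio V E {v} = 1" using ratio_eq[of "{v}"] v kpos by simp
  then show ?thesis using cheeger_le[of "{v}"] v nV by auto
qed

lemma hyp_half: assumes "S \<subseteq> V" "S \<noteq> {}" "2 * card S \<le> card V"
  shows "cheeger V E * real k * real (card S) \<le> real (boundary_size V E S)"
proof -
  have "S \<noteq> V"
  proof
    assume "S = V" then have "2 * card V \<le> card V" using assms(3) by simp
    then show False using n2 by linarith
  qed
  have pos: "real k * real (card S) > 0" using kpos assms fin by (auto simp: card_gt_0_iff finite_subset)
  have "cheeger V E \<le> real (boundary_size V E S) / (real k * real (card S))"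
    using cheeger_le[OF assms(1,2) \<open>S \<noteq> V\<close>] ratio_eq[OF assms(1,3)] by simp
  then show ?thesis using pos by (simp add: field_simps)
qed

lemma sq_pt: fixes a b g :: real assumes "a \<ge> 0" "b \<ge> 0" "\<bar>a - b\<bar> \<le> g"
  shows "max (a\<^sup>2 - b\<^sup>2) 0 + max (b\<^sup>2 - a\<^sup>2) 0 \<le> g * (a + b)"
proof -
  have "max (a\<^sup>2 - b\<^sup>2) 0 + max (b\<^sup>2 - a\<^sup>2) 0 = \<bar>a\<^sup>2 - b\<^sup>2\<bar>" by (auto simp: max_def)
  also have "\<dots> = \<bar>(a - b) * (a + b)\<bar>" by (simp add: power2_eq_square algebra_simps)
  also have "\<dots> = \<bar>a - b\<bar> * (a + b)" using assms by (simp add: abs_mult)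
  also have "\<dots> \<le> g * (a + b)" using assms by (intro mult_right_mono) auto
  finally show ?thesis .
qed

lemma half:
  assumes edges: "\<And>u v. u \<in> V \<Longrightarrow> v \<in> V \<Longrightarrow> E u v \<Longrightarrow> \<bar>x u - x v\<bar> \<le> g"
    and med: "2 * card {v\<in>V. x v > m} \<le> card V"
  shows "cheeger V E * (\<Sum>v\<in>V. (max (x v - m) 0)\<^sup>2) \<le> g * (\<Sum>v\<in>V. max (x v - m) 0)"
proof -
  define y where "y = (\<lambda>v. max (x v - m) 0)"
  define f where "f = (\<lambda>v. if v \<in> V then (y v)\<^sup>2 else 0)"
  define P0 where "P0 = {v\<in>V. x v > m}"
  have P0V: "P0 \<subseteq> V" unfolding P0_def by auto
  have hyp: "cheeger V E * real k * real (card S) \<le> real (boundary_size V E S)"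
    if "S \<subseteq> P0" "S \<noteq> {}" for S
  proof -
    have "card S \<le> card P0" using that fin P0V by (intro card_mono) (auto simp: finite_subset)
    then have "2 * card S \<le> card V" using med unfolding P0_def by linarith
    then show ?thesis using hyp_half[of S] that P0V by auto
  qed
  have ynn: "\<And>v. y v \<ge> 0" unfolding y_def by simp
  have co: "cheeger V E * real k * (\<Sum>v\<in>V. f v) \<le> Dsum f"
  proof (rule coarea[OF P0V, of "cheeger V E * real k", OF hyp])
    show "\<forall>v. f v \<ge> 0" unfolding f_def by simp
    show "\<forall>v. f v > 0 \<longrightarrow> v \<in> P0"
    proof (intro allI impI)
      fix v assume "f v > 0"
      then have "v \<in> V" "y v \<noteq> 0" unfolding f_def by (auto split: if_splits)
      then show "v \<in> P0" unfolding P0_def y_def by (auto simp: max_def split: if_splits)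
    qed
  qed
  have sf: "(\<Sum>v\<in>V. f v) = (\<Sum>v\<in>V. (y v)\<^sup>2)" unfolding f_def by simp
  define D1 where "D1 = (\<Sum>u\<in>V. \<Sum>v\<in>V. if E u v then max ((y u)\<^sup>2 - (y v)\<^sup>2) 0 else 0)"
  define D2 where "D2 = (\<Sum>u\<in>V. \<Sum>v\<in>V. if E u v then max ((y v)\<^sup>2 - (y u)\<^sup>2) 0 else 0)"
  have Df: "Dsum f = D1" unfolding Dsum_def D1_def f_def by (intro sum.cong refl) auto
  have D21: "D2 = D1"
  proof -
    have "D2 = (\<Sum>v\<in>V. \<Sum>u\<in>V. if E u v then max ((y v)\<^sup>2 - (y u)\<^sup>2) 0 else 0)"
      unfolding D2_def by (rule sum.swap)
    also have "\<dots> = D1" unfolding D1_def by (intro sum.cong refl) (auto intro: symE)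
    finally show ?thesis .
  qed
  have "D1 + D2 = (\<Sum>u\<in>V. \<Sum>v\<in>V. if E u v then max ((y u)\<^sup>2 - (y v)\<^sup>2) 0 + max ((y v)\<^sup>2 - (y u)\<^sup>2) 0 else 0)"
    unfolding D1_def D2_def sum.distrib[symmetric] by (intro sum.cong refl) auto
  also have "\<dots> \<le> (\<Sum>u\<in>V. \<Sum>v\<in>V. (if E u v then g * y u else 0) + (if E u v then g * y v else 0))"
  proof (intro sum_mono)
    fix u v assume uv: "u \<in> V" "v \<in> V"
    show "(if E u v then max ((y u)\<^sup>2 - (y v)\<^sup>2) 0 + max ((y v)\<^sup>2 - (y u)\<^sup>2) 0 else 0)
        \<le> (if E u v then g * y u else 0) + (if E u v then g * y v else 0)"
    proof (cases "E u v")
      case True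
      have "\<bar>y u - y v\<bar> \<le> \<bar>x u - x v\<bar>" unfolding y_def by (auto simp: max_def)
      also have "\<dots> \<le> g" using edges uv True by auto
      finally show ?thesis using sq_pt[OF ynn ynn] True by (simp add: algebra_simps)
    qed simp
  qed
  also have "\<dots> = (\<Sum>u\<in>V. \<Sum>v\<in>V. if E u v then g * y u else 0) + (\<Sum>u\<in>V. \<Sum>v\<in>V. if E u v then g * y v else 0)"
    by (simp add: sum.distrib)
  also have "(\<Sum>u\<in>V. \<Sum>v\<in>V. if E u v then g * y u else 0) = (\<Sum>u\<in>V. g * y u * real k)"
    by (intro sum.cong refl) (rule deg_sum)
  also have "(\<Sum>u\<in>V. \<Sum>v\<in>V. if E u v then g * y v else 0) = (\<Sum>v\<in>V. \<Sum>u\<in>V. if E u v then g * y v else 0)"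
    by (rule sum.swap)
  also have "\<dots> = (\<Sum>v\<in>V. g * y v * real k)"
    by (intro sum.cong refl) (rule deg_sum2)
  finally have "2 * D1 \<le> 2 * (g * real k * (\<Sum>v\<in>V. y v))"
    using D21 by (simp add: sum_distrib_left sum_distrib_right algebra_simps)
  then have "cheeger V E * real k * (\<Sum>v\<in>V. (y v)\<^sup>2) \<le> real k * (g * (\<Sum>v\<in>V. y v))"
    using co sf Df by (simp add: algebra_simps)
  then have "real k * (cheeger V E * (\<Sum>v\<in>V. (y v)\<^sup>2)) \<le> real k * (g * (\<Sum>v\<in>V. y v))"
    by (simp add: algebra_simps)
  then show ?thesis using kpos unfolding y_def by (simp add: mult_le_cancel_left)
qed

lemma median: fixes x :: "'a \<Rightarrow> real"
  shows "\<exists>m. 2 * card {v\<in>V. x v > m} \<le> card V \<and> 2 * card {v\<in>V. x v < m} \<le> card V"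
proof -
  let ?A = "x ` V"
  have Vne: "V \<noteq> {}" using n2 by auto
  have finA: "finite ?A" using fin by simp
  define B where "B = {t \<in> ?A. 2 * card {v\<in>V. x v < t} \<le> card V}"
  have "Min ?A \<in> B"
  proof -
    have "{v\<in>V. x v < Min ?A} = {}"
    proof -
      have "\<And>v. v \<in> V \<Longrightarrow> Min ?A \<le> x v" using finA by (intro Min_le) auto
      then show ?thesis by (auto simp: not_less[symmetric])
    qed
    then have "card {v\<in>V. x v < Min ?A} = 0" by (simp only: card.empty)
    moreover have "Min ?A \<in> ?A" using finA Vne by (intro Min_in) auto
    ultimately show ?thesis unfolding B_def by (simp del: Min_less_iff)
  qed
  then have Bne: "B \<noteq> {}" by auto
  have finB: "finite B" unfolding B_def using finA by simp
  define m where "m = Max B"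
  have mB: "m \<in> B" unfolding m_def using finB Bne by (rule Max_in)
  have "2 * card {v\<in>V. x v > m} \<le> card V"
  proof (cases "{v\<in>V. x v > m} = {}")
    case True then have "card {v\<in>V. x v > m} = 0" by (simp only: card.empty)
    then show ?thesis by simp
  next
    case False
    define C where "C = {t \<in> ?A. t > m}"
    have finC: "finite C" unfolding C_def using finA by simp
    have Cne: "C \<noteq> {}" using False unfolding C_def by auto
    define t where "t = Min C"
    have tC: "t \<in> C" unfolding t_def using finC Cne by (rule Min_in)
    have tnB: "t \<notin> B"
    proof
      assume "t \<in> B" then have "t \<le> m" unfolding m_def using finB by (simp add: Max_ge)
      then show False using tC unfolding C_def by auto
    qed
    then have big: "2 * card {v\<in>V. x v < t} > card V" using tC unfolding B_def C_def by auto
    have eq: "{v\<in>V. x v < t} = {v\<in>V. x v \<le> m}"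
    proof (intro set_eqI iffI)
      fix v assume v: "v \<in> {v\<in>V. x v < t}"
      show "v \<in> {v\<in>V. x v \<le> m}"
      proof (rule ccontr)
        assume "v \<notin> {v\<in>V. x v \<le> m}"
        then have "x v \<in> C" using v unfolding C_def by auto
        then have "t \<le> x v" unfolding t_def using finC by (simp add: Min_le)
        then show False using v by auto
      qed
    next
      fix v assume "v \<in> {v\<in>V. x v \<le> m}"
      then show "v \<in> {v\<in>V. x v < t}" using tC unfolding C_def by auto
    qed
    have "{v\<in>V. x v > m} = V - {v\<in>V. x v \<le> m}" by auto
    then have "card {v\<in>V. x v > m} = card V - card {v\<in>V. x v \<le> m}"
      using fin by (simp add: card_Diff_subset)
    moreover have "card {v\<in>V. x v \<le> m} \<le> card V" using fin by (intro card_mono) auto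
    moreover have "card V < 2 * card {v\<in>V. x v \<le> m}" using big eq by simp
    ultimately show ?thesis by linarith
  qed
  moreover have "2 * card {v\<in>V. x v < m} \<le> card V" using mB unfolding B_def by auto
  ultimately show ?thesis by blast
qed

lemma gx_edge: assumes "u \<in> V" "v \<in> V" "E u v" shows "\<bar>x u - x v\<bar> \<le> gamma_x V E x"
proof -
  have "{\<bar>x u - x v\<bar> | u v. u \<in> V \<and> v \<in> V \<and> E u v} \<subseteq> (\<lambda>p. \<bar>x (fst p) - x (snd p)\<bar>) ` (V \<times> V)"
    by force
  from finite_subset[OF this] have "finite {\<bar>x u - x v\<bar> | u v. u \<in> V \<and> v \<in> V \<and> E u v}"
    using fin by auto
  then show ?thesis unfolding gamma_x_def using assms by (intro Max_ge) auto
qed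

lemma gx_nonneg: "gamma_x V E x \<ge> 0"
proof -
  obtain v where v: "v \<in> V" using n2 by fastforce
  then obtain w where "E v w" using ex_nb by auto
  then show ?thesis using gx_edge[of v w x] inV by force
qed

lemma big_sq: assumes feas: "x \<in> feasible V" and gT: "gamma_x V E x \<le> (real (card V) + 1) / (2 * (real (card V) - 1))"
  shows "(\<Sum>v\<in>V. (x v)\<^sup>2) \<ge> real (card V) / (real (card V) - 1) + 1/4"
proof -
  define nr where "nr = real (card V)"
  have nr2: "nr \<ge> 2" unfolding nr_def using n2 by simp
  have Vne: "V \<noteq> {}" using n2 by auto
  have "Max ((\<lambda>v. \<bar>x v\<bar>) ` V) \<in> (\<lambda>v. \<bar>x v\<bar>) ` V" using fin Vne by (intro Max_in) auto
  then obtain v0 where v0: "v0 \<in> V" "\<bar>x v0\<bar> = 1" using feas unfolding feasible_def by auto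
  obtain u1 where "E v0 u1" using ex_nb[OF v0(1)] by auto
  then have u1: "u1 \<in> V" "u1 \<noteq> v0" "E v0 u1" using inV irr by auto
  define a where "a = x v0"
  have a2: "a\<^sup>2 = 1" using v0 unfolding a_def using abs1_sq by blast
  define W where "W = V - {v0}"
  have cW: "real (card W) = nr - 1" unfolding W_def nr_def using v0 fin n2 by (simp add: of_nat_diff)
  have finW: "finite W" unfolding W_def using fin by simp
  have s0: "(\<Sum>v\<in>V. x v) = 0" using feas unfolding feasible_def by auto
  have sW: "(\<Sum>v\<in>W. x v) = - a"
    using s0 sum.remove[OF fin v0(1), of x] unfolding W_def a_def by simp
  have sq: "(\<Sum>v\<in>V. (x v)\<^sup>2) = 1 + (\<Sum>v\<in>W. (x v)\<^sup>2)"
    using sum.remove[OF fin v0(1), of "\<lambda>v. (x v)\<^sup>2"] a2 unfolding W_def a_def by simp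
  define \<mu> where "\<mu> = - a / (nr - 1)"
  have exp: "(\<Sum>v\<in>W. (x v - \<mu>)\<^sup>2) = (\<Sum>v\<in>W. (x v)\<^sup>2) - 2 * \<mu> * (\<Sum>v\<in>W. x v) + real (card W) * \<mu>\<^sup>2"
    by (rule sum_sq_shift)
  have "- 2 * \<mu> * (- a) + (nr - 1) * \<mu>\<^sup>2 = - 1 / (nr - 1)"
  proof -
    have p: "nr - 1 > 0" using nr2 by simp
    have "- 2 * \<mu> * (- a) = - 2 * a\<^sup>2 / (nr - 1)" unfolding \<mu>_def by (simp add: power2_eq_square)
    moreover have "(nr - 1) * \<mu>\<^sup>2 = a\<^sup>2 / (nr - 1)" unfolding \<mu>_def using p by (simp add: power2_eq_square)
    ultimately show ?thesis using a2 by (simp add: diff_divide_distrib[symmetric])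
  qed
  then have exp2: "(\<Sum>v\<in>W. (x v - \<mu>)\<^sup>2) = (\<Sum>v\<in>W. (x v)\<^sup>2) - 1 / (nr - 1)"
    using exp sW cW by simp
  have "(x u1 - \<mu>)\<^sup>2 \<le> (\<Sum>v\<in>W. (x v - \<mu>)\<^sup>2)"
    using finW u1 unfolding W_def by (intro member_le_sum) auto
  moreover have "(x u1 - \<mu>)\<^sup>2 \<ge> 1/4"
  proof -
    have "x u1 - \<mu> = a * nr / (nr - 1) + (x u1 - a)" unfolding \<mu>_def using nr2 by (simp add: field_simps)
    moreover have "\<bar>a * nr / (nr - 1)\<bar> = nr / (nr - 1)" using v0 nr2 unfolding a_def by (simp add: abs_mult)
    moreover have "\<bar>x u1 - a\<bar> \<le> gamma_x V E x" using gx_edge[of v0 u1 x] u1 v0 unfolding a_def by (simp add: abs_minus_commute)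
    ultimately have "\<bar>x u1 - \<mu>\<bar> \<ge> nr / (nr - 1) - gamma_x V E x" by linarith
    moreover have "nr / (nr - 1) - (nr + 1) / (2 * (nr - 1)) = 1/2"
    proof -
      have p: "nr - 1 \<noteq> 0" using nr2 by simp
      have "nr / (nr - 1) = 1 + 1 / (nr - 1)" using p by (simp add: field_simps)
      moreover have "(nr + 1) / (2 * (nr - 1)) = 1/2 + 1 / (nr - 1)" using p by (simp add: field_simps)
      ultimately show ?thesis by simp
    qed
    ultimately have "\<bar>x u1 - \<mu>\<bar> \<ge> 1/2" using gT unfolding nr_def by linarith
    then have "(1/2)\<^sup>2 \<le> \<bar>x u1 - \<mu>\<bar>\<^sup>2" by (intro power_mono) auto
    then show ?thesis by (simp add: power2_eq_square)
  qed
  moreover have "1 + 1 / (nr - 1) = nr / (nr - 1)" using nr2 by (simp add: field_simps)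
  ultimately show ?thesis using sq exp2 unfolding nr_def by linarith
qed

lemma per_x: assumes feas: "x \<in> feasible V"
  shows "min ((real (card V) - 1) * ((real (card V) + 1) / (2 * (real (card V) - 1)))\<^sup>2)
             ((cheeger V E)\<^sup>2 * (1 + (real (card V) - 1) / (4 * real (card V))))
         \<le> (real (card V) - 1) * (gamma_x V E x)\<^sup>2"
proof -
  define nr where "nr = real (card V)"
  define T where "T = (nr + 1) / (2 * (nr - 1))"
  define \<gamma> where "\<gamma> = gamma_x V E x"
  define h where "h = cheeger V E"
  have nr2: "nr \<ge> 2" unfolding nr_def using n2 by simp
  have Tnn: "T \<ge> 0" unfolding T_def using nr2 by simp
  have gnn: "\<gamma> \<ge> 0" unfolding \<gamma>_def by (rule gx_nonneg)
  have hpos: "h > 0" unfolding h_def by (rule h_pos)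
  show ?thesis
  proof (cases "\<gamma> \<ge> T")
    case True
    then have "T\<^sup>2 \<le> \<gamma>\<^sup>2" using Tnn by (intro power_mono) auto
    then have "(nr - 1) * T\<^sup>2 \<le> (nr - 1) * \<gamma>\<^sup>2" using nr2 by (intro mult_left_mono) auto
    then show ?thesis unfolding nr_def T_def \<gamma>_def by (simp add: min.coboundedI1)
  next
    case False
    obtain m where med: "2 * card {v\<in>V. x v > m} \<le> card V" "2 * card {v\<in>V. x v < m} \<le> card V"
      using median[of x] by blast
    have H1: "h * (\<Sum>v\<in>V. (max (x v - m) 0)\<^sup>2) \<le> \<gamma> * (\<Sum>v\<in>V. max (x v - m) 0)"
      unfolding h_def \<gamma>_def by (rule half[OF gx_edge med(1)])
    have med2: "2 * card {v\<in>V. - x v > - m} \<le> card V" using med(2) by simp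
    have H2: "h * (\<Sum>v\<in>V. (max (- x v - - m) 0)\<^sup>2) \<le> \<gamma> * (\<Sum>v\<in>V. max (- x v - - m) 0)"
      unfolding h_def \<gamma>_def
      by (rule half[OF _ med2]) (use gx_edge[of _ _ x] in \<open>auto simp: abs_minus_commute\<close>)
    define q where "q = (\<Sum>v\<in>V. (x v - m)\<^sup>2)"
    define s where "s = (\<Sum>v\<in>V. \<bar>x v - m\<bar>)"
    have pq: "(x v - m)\<^sup>2 = (max (x v - m) 0)\<^sup>2 + (max (- x v - - m) 0)\<^sup>2" for v
      by (auto simp: max_def power2_eq_square algebra_simps)
    have ps: "\<bar>x v - m\<bar> = max (x v - m) 0 + max (- x v - - m) 0" for v
      by (auto simp: max_def)
    have q_eq: "q = (\<Sum>v\<in>V. (max (x v - m) 0)\<^sup>2) + (\<Sum>v\<in>V. (max (- x v - - m) 0)\<^sup>2)"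
      unfolding q_def by (simp add: pq sum.distrib)
    have s_eq: "s = (\<Sum>v\<in>V. max (x v - m) 0) + (\<Sum>v\<in>V. max (- x v - - m) 0)"
      unfolding s_def by (simp only: ps sum.distrib)
    have hqs: "h * q \<le> \<gamma> * s" using H1 H2 q_eq s_eq by (simp add: algebra_simps)
    have cs: "s\<^sup>2 \<le> q * nr"
      using sum_squared_le_sum_of_squares[of "\<lambda>v. \<bar>x v - m\<bar>" V] unfolding s_def q_def nr_def by simp
    have s0: "(\<Sum>v\<in>V. x v) = 0" using feas unfolding feasible_def by auto
    have "q = (\<Sum>v\<in>V. (x v)\<^sup>2) + nr * m\<^sup>2"
      unfolding q_def nr_def using sum_sq_shift[of x m V] s0 by simp
    moreover have "(\<Sum>v\<in>V. (x v)\<^sup>2) \<ge> nr / (nr - 1) + 1/4"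
      using big_sq[OF feas] False unfolding nr_def T_def \<gamma>_def by simp
    ultimately have qlb: "q \<ge> nr / (nr - 1) + 1/4" using nr2 by (smt (verit) mult_nonneg_nonneg zero_le_power2)
    have nrq: "nr / (nr - 1) > 0" using nr2 by simp
    have qpos: "q > 0" using qlb nrq by linarith
    have "(h * q)\<^sup>2 \<le> (\<gamma> * s)\<^sup>2" using hqs hpos qpos by (intro power_mono) auto
    also have "\<dots> = \<gamma>\<^sup>2 * s\<^sup>2" by (simp add: power_mult_distrib)
    also have "\<dots> \<le> \<gamma>\<^sup>2 * (q * nr)" using cs by (intro mult_left_mono) auto
    finally have "q * (h\<^sup>2 * q) \<le> q * (\<gamma>\<^sup>2 * nr)" by (simp add: power2_eq_square algebra_simps)
    then have hq: "h\<^sup>2 * q \<le> \<gamma>\<^sup>2 * nr" using qpos by simp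
    have "h\<^sup>2 * (nr / (nr - 1) + 1/4) \<le> h\<^sup>2 * q" using qlb by (intro mult_left_mono) auto
    then have A: "h\<^sup>2 * (nr / (nr - 1) + 1/4) \<le> \<gamma>\<^sup>2 * nr" using hq by linarith
    have B: "(nr - 1) / nr * (nr / (nr - 1) + 1/4) = 1 + (nr - 1) / (4 * nr)"
      using nr2 by (simp add: field_simps)
    have "(nr - 1) / nr * (h\<^sup>2 * (nr / (nr - 1) + 1/4)) \<le> (nr - 1) / nr * (\<gamma>\<^sup>2 * nr)"
      using A nr2 by (intro mult_left_mono) auto
    moreover have "(nr - 1) / nr * (h\<^sup>2 * (nr / (nr - 1) + 1/4)) = h\<^sup>2 * (1 + (nr - 1) / (4 * nr))"
      using B by (metis mult.left_commute)
    moreover have "(nr - 1) / nr * (\<gamma>\<^sup>2 * nr) = (nr - 1) * \<gamma>\<^sup>2" using nr2 by simp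
    ultimately have "h\<^sup>2 * (1 + (nr - 1) / (4 * nr)) \<le> (nr - 1) * \<gamma>\<^sup>2" by simp
    then show ?thesis unfolding nr_def h_def \<gamma>_def by (simp add: min.coboundedI2)
  qed
qed

lemma feas_ne: "feasible V \<noteq> {}"
proof -
  obtain v0 where v0: "v0 \<in> V" using n2 by fastforce
  then obtain w where "E v0 w" using ex_nb by auto
  then have w: "w \<in> V" "w \<noteq> v0" using inV irr by auto
  define x where "x = (\<lambda>v. (if v = v0 then 1 else 0) - (if v = w then 1 else (0::real)))"
  have "(\<Sum>v\<in>V. x v) = 0" unfolding x_def using fin v0 w by (simp add: sum_subtractf)
  moreover have "\<forall>v. v \<notin> V \<longrightarrow> x v = 0" unfolding x_def using v0 w by auto
  moreover have "Max ((\<lambda>v. \<bar>x v\<bar>) ` V) = 1"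
  proof (rule Max_eqI)
    show "finite ((\<lambda>v. \<bar>x v\<bar>) ` V)" using fin by simp
    show "\<And>y. y \<in> (\<lambda>v. \<bar>x v\<bar>) ` V \<Longrightarrow> y \<le> 1" unfolding x_def using w by auto
    show "1 \<in> (\<lambda>v. \<bar>x v\<bar>) ` V" unfolding x_def using v0 w by force
  qed
  ultimately have "x \<in> feasible V" unfolding feasible_def by auto
  then show ?thesis by auto
qed

end

theorem theorem4p6:
  fixes V :: "'a set" and E :: "'a \<Rightarrow> 'a \<Rightarrow> bool" and k :: nat
  assumes "simple_graph V E" and "connected_graph V E" and "regular V E k"
    and "card V \<ge> 2"
  shows "cheeger V E < sqrt (real (card V) - 1) * gamma V E"
proof -
  interpret rg V E k using assms by unfold_locales
  define nr where "nr = real (card V)"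
  define T where "T = (nr + 1) / (2 * (nr - 1))"
  define h where "h = cheeger V E"
  define G where "G = min ((nr - 1) * T\<^sup>2) (h\<^sup>2 * (1 + (nr - 1) / (4 * nr)))"
  have nr2: "nr \<ge> 2" unfolding nr_def using assms(4) by simp
  have hpos: "h > 0" unfolding h_def by (rule h_pos)
  have hle: "h \<le> 1" unfolding h_def by (rule h_le1)
  have G1: "G > h\<^sup>2"
  proof -
    have "(nr - 1) * T\<^sup>2 = (nr + 1)\<^sup>2 / (4 * (nr - 1))"
    proof -
      have p: "nr - 1 \<noteq> 0" using nr2 by simp
      have "T\<^sup>2 = (nr + 1)\<^sup>2 / (4 * ((nr - 1) * (nr - 1)))"
        unfolding T_def by (simp add: power_divide power2_eq_square algebra_simps)
      then show ?thesis using p by simp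
    qed
    moreover have "(nr + 1)\<^sup>2 > 4 * (nr - 1)"
    proof -
      have "(nr + 1)\<^sup>2 - 4 * (nr - 1) = (nr - 1)\<^sup>2 + 4" by (simp add: power2_eq_square algebra_simps)
      then show ?thesis by (smt (verit) zero_le_power2)
    qed
    moreover have "4 * (nr - 1) > 0" using nr2 by simp
    ultimately have "(nr - 1) * T\<^sup>2 > 1" by (simp add: less_divide_eq)
    moreover have "h\<^sup>2 \<le> 1" using hle hpos by (simp add: power_le_one)
    moreover have "h\<^sup>2 * (1 + (nr - 1) / (4 * nr)) > h\<^sup>2"
    proof -
      have "(nr - 1) / (4 * nr) > 0" using nr2 by simp
      moreover have "h\<^sup>2 > 0" using hpos by simp
      ultimately have "h\<^sup>2 * ((nr - 1) / (4 * nr)) > 0" using mult_pos_pos by blast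
      then show ?thesis by (simp add: distrib_left)
    qed
    ultimately show ?thesis unfolding G_def by linarith
  qed
  define g0 where "g0 = sqrt (G / (nr - 1))"
  have "g0 \<le> gamma V E"
    unfolding gamma_def
  proof (rule cInf_greatest)
    show "gamma_x V E ` feasible V \<noteq> {}" using feas_ne by simp
    fix y assume "y \<in> gamma_x V E ` feasible V"
    then obtain x where x: "x \<in> feasible V" "y = gamma_x V E x" by auto
    have "G \<le> (nr - 1) * y\<^sup>2" using per_x[OF x(1)] x(2) unfolding G_def nr_def T_def h_def by simp
    then have "G / (nr - 1) \<le> y\<^sup>2" using nr2 by (simp add: field_simps)
    then have "g0 \<le> sqrt (y\<^sup>2)" unfolding g0_def by (rule real_sqrt_le_mono)
    then show "g0 \<le> y" using gx_nonneg[of x] x(2) by simp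
  qed
  then have "sqrt (nr - 1) * g0 \<le> sqrt (nr - 1) * gamma V E" using nr2 by (intro mult_left_mono) auto
  moreover have "sqrt (nr - 1) * g0 = sqrt G"
    unfolding g0_def using nr2 by (simp add: real_sqrt_mult[symmetric])
  moreover have "h < sqrt G"
  proof -
    have "sqrt (h\<^sup>2) < sqrt G" using G1 by (rule real_sqrt_less_mono)
    then show ?thesis using hpos by simp
  qed
  ultimately show ?thesis unfolding h_def nr_def by linarith
qed

end
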